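(* Let $\mathbb{T}=\mathbb{R}/\mathbb{Z}$. There exists a constant $C>0$, independent of the meshes and of $g$, such that $$\|\mathcal{P}_hg\|_{H^2_{h,\Delta t}(\mathbb{T})}\le(1+C\Delta t)\|g\|_{H^2_{h,\Delta t}(\mathbb{T})}\quad\text{for all }g\in H^2(\mathbb{T}).$$
   Context: Temporal mesh $0=t^0<\dots<t^N=T$, $\Delta t=\max_n(t^{n+1}-t^n)<1$. Spatial mesh $0=x_0<\dots<x_M=1$, $h=\max_j(x_{j+1}-x_j)$. $V_h^{2,3}$: $C^2(\mathbb{T})$ functions, cubic on each $[x_j,x_{j+1}]$. $\mathcal{P}_h:C^0(\mathbb{T})\to V_h^{2,3}$: $(\mathcal{P}_hg)(x_j)=g(x_j)$, $j=0,\dots,M-1$. $\|g\|_{H^2_{h,\Delta t}(\mathbb{T})}=\big(\|g\|_{L^2(\mathbb{T})}^2+\tfrac{h^4}{\Delta t}\|g''\|_{L^2(\mathbb{T})}^2\big)^{1/2}$. *)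

theory Defs
  imports "HOL-Analysis.Analysis"
begin

text \<open>Functions on the torus T = R/Z are represented as 1-periodic functions real => real.\<close>

definition periodic1 :: "(real \<Rightarrow> real) \<Rightarrow> bool" where
  "periodic1 f \<longleftrightarrow> (\<forall>x. f (x + 1) = f x)"

definition L2_T :: "(real \<Rightarrow> real) \<Rightarrow> bool" where
  "L2_T f \<longleftrightarrow> f absolutely_integrable_on {0..1} \<and> (\<lambda>x. (f x)\<^sup>2) integrable_on {0..1}"

definition L2_norm_T :: "(real \<Rightarrow> real) \<Rightarrow> real" where
  "L2_norm_T f = sqrt (integral {0..1} (\<lambda>x. (f x)\<^sup>2))"

text \<open>H^2(T): g is 1-periodic, continuously differentiable with derivative g1, and g1 is
  absolutely continuous with a.e.-derivative g2 in L^2(T) (g1 b - g1 a = integral of g2 over [a,b]).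
  Then g2 is the (weak) second derivative g''.\<close>
definition H2_T :: "(real \<Rightarrow> real) \<Rightarrow> (real \<Rightarrow> real) \<Rightarrow> (real \<Rightarrow> real) \<Rightarrow> bool" where
  "H2_T g g1 g2 \<longleftrightarrow> periodic1 g \<and> periodic1 g2 \<and> L2_T g2 \<and>
     (\<forall>x. (g has_real_derivative g1 x) (at x)) \<and>
     (\<forall>a b. a \<le> b \<longrightarrow> (g2 has_integral (g1 b - g1 a)) {a..b})"

definition H2_hdt_norm :: "real \<Rightarrow> real \<Rightarrow> (real \<Rightarrow> real) \<Rightarrow> (real \<Rightarrow> real) \<Rightarrow> real" where
  "H2_hdt_norm h dt g g2 =
     sqrt ((L2_norm_T g)\<^sup>2 + h ^ 4 / dt * (L2_norm_T g2)\<^sup>2)"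

definition is_mesh :: "(nat \<Rightarrow> real) \<Rightarrow> nat \<Rightarrow> real \<Rightarrow> bool" where
  "is_mesh p n L \<longleftrightarrow> 1 \<le> n \<and> p 0 = 0 \<and> p n = L \<and> (\<forall>j<n. p j < p (Suc j))"

definition mesh_size :: "(nat \<Rightarrow> real) \<Rightarrow> nat \<Rightarrow> real" where
  "mesh_size p n = Max ((\<lambda>j. p (Suc j) - p j) ` {..<n})"

definition spline23 :: "(nat \<Rightarrow> real) \<Rightarrow> nat \<Rightarrow> (real \<Rightarrow> real) \<Rightarrow> (real \<Rightarrow> real) \<Rightarrow> (real \<Rightarrow> real) \<Rightarrow> bool" where
  "spline23 xs M s s1 s2 \<longleftrightarrow> periodic1 s \<and>
     (\<forall>x. (s has_real_derivative s1 x) (at x)) \<and>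
     (\<forall>x. (s1 has_real_derivative s2 x) (at x)) \<and> continuous_on UNIV s2 \<and>
     (\<forall>j<M. \<exists>a b c d. \<forall>x\<in>{xs j..xs (Suc j)}. s x = a + b * x + c * x\<^sup>2 + d * x ^ 3)"

end

theory Submission
  imports Defs
begin


lemma mesh_mono:
  fixes xs :: "nat \<Rightarrow> real"
  assumes "\<forall>j<n. xs j \<le> xs (Suc j)" "i \<le> k" "k \<le> n"
  shows "xs i \<le> xs k"
  using assms(2,3)
proof (induction k)
  case 0 then show ?case by simp
next
  case (Suc k)
  show ?case
  proof (cases "i = Suc k")
    case False
    then have "xs i \<le> xs k" using Suc by simp
    also have "xs k \<le> xs (Suc k)" using assms(1) Suc.prems by simp
    finally show ?thesis .
  qed simp
qed

lemma integral_mesh_sum: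
  fixes f :: "real \<Rightarrow> real" and xs :: "nat \<Rightarrow> real"
  assumes m: "\<forall>j<n. xs j \<le> xs (Suc j)" and fi: "f integrable_on {xs 0..xs n}"
  shows "integral {xs 0..xs n} f = (\<Sum>j<n. integral {xs j..xs (Suc j)} f)"
  using m fi
proof (induction n)
  case 0 then show ?case by simp
next
  case (Suc n)
  have m1: "\<forall>j<n. xs j \<le> xs (Suc j)" using Suc.prems by simp
  have le1: "xs 0 \<le> xs n" using mesh_mono[OF m1, of 0 n] by simp
  have le2: "xs n \<le> xs (Suc n)" using Suc.prems by simp
  have fi': "f integrable_on {xs 0..xs n}"
    using integrable_on_subinterval[OF Suc.prems(2)] le2 by auto
  have "integral {xs 0..xs (Suc n)} f = integral {xs 0..xs n} f + integral {xs n..xs (Suc n)} f"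
    using Henstock_Kurzweil_Integration.integral_combine[OF le1 le2 Suc.prems(2)] by simp
  then show ?case using Suc.IH[OF m1 fi'] by simp
qed

lemma cs_int:
  fixes f :: "real \<Rightarrow> real"
  assumes cd: "c \<le> d" and fi: "f integrable_on {c..d}" and f2: "(\<lambda>x. (f x)\<^sup>2) integrable_on {c..d}"
  shows "(integral {c..d} f)\<^sup>2 \<le> (d - c) * integral {c..d} (\<lambda>x. (f x)\<^sup>2)"
proof (cases "c = d")
  case True then show ?thesis by simp
next
  case False
  then have dc: "d - c > 0" using cd by simp
  define m where "m = integral {c..d} f / (d - c)"
  have eq: "(\<lambda>x. (f x - m)\<^sup>2) = (\<lambda>x. (f x)\<^sup>2 - 2 * m * f x + m\<^sup>2)"
    by (auto simp: power2_eq_square algebra_simps)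
  have ii: "(\<lambda>x. (f x)\<^sup>2 - 2 * m * f x + m\<^sup>2) integrable_on {c..d}"
    by (intro integrable_diff integrable_add integrable_on_mult_right f2 fi integrable_const_ivl)
  have "0 \<le> integral {c..d} (\<lambda>x. (f x - m)\<^sup>2)"
    by (rule integral_nonneg) (use ii eq in auto)
  also have "\<dots> = integral {c..d} (\<lambda>x. (f x)\<^sup>2 - 2 * m * f x) + integral {c..d} (\<lambda>x. m\<^sup>2)"
    unfolding eq by (rule integral_add) (intro integrable_diff integrable_on_mult_right f2 fi integrable_const_ivl)+
  also have "integral {c..d} (\<lambda>x. (f x)\<^sup>2 - 2 * m * f x) = integral {c..d} (\<lambda>x. (f x)\<^sup>2) - integral {c..d} (\<lambda>x. 2 * m * f x)"
    by (rule integral_diff) (intro integrable_on_mult_right f2 fi)+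
  also have "integral {c..d} (\<lambda>x. 2 * m * f x) = 2 * m * integral {c..d} f"
    by (simp add: fi)
  also have "integral {c..d} (\<lambda>x. m\<^sup>2) = m\<^sup>2 * (d - c)" using cd by simp
  finally have "0 \<le> integral {c..d} (\<lambda>x. (f x)\<^sup>2) - 2 * m * integral {c..d} f + m\<^sup>2 * (d - c)" .
  moreover have "\<And>I J L::real. L > 0 \<Longrightarrow> 0 \<le> J - 2 * (I / L) * I + (I / L)\<^sup>2 * L \<Longrightarrow> I\<^sup>2 \<le> L * J"
  proof -
    fix I J L :: real assume L: "L > 0" and h: "0 \<le> J - 2 * (I / L) * I + (I / L)\<^sup>2 * L"
    have "J - 2 * (I / L) * I + (I / L)\<^sup>2 * L = (L * J - I\<^sup>2) / L"
      using L by (simp add: field_simps power2_eq_square)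
    with h L show "I\<^sup>2 \<le> L * J" by (simp add: divide_nonneg_pos zero_le_divide_iff)
  qed
  ultimately show ?thesis using dc unfolding m_def by blast
qed



lemma abs_int_real_prod:
  fixes f :: "real \<Rightarrow> real"
  assumes "f absolutely_integrable_on {a..b}" "continuous_on {a..b} g"
  shows "(\<lambda>x. g x * f x) absolutely_integrable_on {a..b}"
proof (rule absolutely_integrable_bounded_measurable_product_real)
  show "g \<in> borel_measurable (lebesgue_on {a..b})"
    by (rule continuous_imp_measurable_on_sets_lebesgue) (use assms in auto)
  show "bounded (g ` {a..b})"
    by (rule compact_imp_bounded, rule compact_continuous_image) (use assms in auto)
qed (use assms in auto)

lemma parts_lemma:
  fixes f F :: "real \<Rightarrow> real"
  assumes ab: "a \<le> b" and fi: "f absolutely_integrable_on {a..b}"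
  and FF: "\<And>x y. a \<le> x \<Longrightarrow> x \<le> y \<Longrightarrow> y \<le> b \<Longrightarrow> (f has_integral (F y - F x)) {x..y}"
  and Fc: "continuous_on {a..b} F"
  shows "((\<lambda>x. (x - b) * f x) has_integral (-(integral {a..b} (\<lambda>t. F t - F a)))) {a..b}"
proof -
  have xfa: "(\<lambda>x. x * f x) absolutely_integrable_on {a..b}"
    by (rule abs_int_real_prod[OF fi]) (intro continuous_intros)
  have xfi: "(\<lambda>x. x * f x) integrable_on {u..v}" if "a \<le> u" "v \<le> b" for u v
    using integrable_on_subinterval[OF set_lebesgue_integral_eq_integral(1)[OF xfa]] that by auto
  have fii: "f integrable_on {u..v}" if "a \<le> u" "v \<le> b" for u v
    using integrable_on_subinterval[OF set_lebesgue_integral_eq_integral(1)[OF fi]] that by auto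
  have afi: "(\<lambda>x. \<bar>f x\<bar>) integrable_on {a..b}"
    using fi by (simp add: absolutely_integrable_on_def)
  have afii: "(\<lambda>x. \<bar>f x\<bar>) integrable_on {u..v}" if "a \<le> u" "v \<le> b" for u v
    using integrable_on_subinterval[OF afi] that by auto
  define A where "A z = integral {a..z} (\<lambda>x. \<bar>f x\<bar>)" for z
  have Ac: "continuous_on {a..b} A"
    unfolding A_def by (rule indefinite_integral_continuous_1[OF afi])
  define P where "P y = integral {a..y} (\<lambda>x. x * f x) - y * (F y - F a)" for y
  define Q where "Q y = - integral {a..y} (\<lambda>t. F t - F a)" for y
  have gen: "\<bar>integral {u..v} (\<lambda>x. (x - c) * f x)\<bar> \<le> (v - u) * (A v - A u)"
    if "a \<le> u" "u \<le> c" "c \<le> v" "v \<le> b" for u v c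
  proof -
    have "\<bar>integral {u..v} (\<lambda>x. (x - c) * f x)\<bar> \<le> integral {u..v} (\<lambda>x. (v - u) * \<bar>f x\<bar>)"
    proof (rule integral_norm_bound_integral[where 'a=real, simplified])
      show "(\<lambda>x. (x - c) * f x) integrable_on {u..v}"
        unfolding left_diff_distrib
        by (intro integrable_diff xfi integrable_on_mult_right fii) (use that in auto)
      show "(\<lambda>x. (v - u) * \<bar>f x\<bar>) integrable_on {u..v}"
        by (intro integrable_on_mult_right afii) (use that in auto)
      fix x assume "x \<in> {u..v}"
      then have "\<bar>x - c\<bar> \<le> v - u" using that by auto
      then show "\<bar>(x - c) * f x\<bar> \<le> (v - u) * \<bar>f x\<bar>"
        by (simp add: abs_mult mult_right_mono)
    qed
    also have "\<dots> = (v - u) * integral {u..v} (\<lambda>x. \<bar>f x\<bar>)"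
      using afii that by simp
    also have "integral {u..v} (\<lambda>x. \<bar>f x\<bar>) = A v - A u"
      unfolding A_def
      using Henstock_Kurzweil_Integration.integral_combine[of a u v "\<lambda>x. \<bar>f x\<bar>", OF _ _ afii] that
      by simp
    finally show ?thesis .
  qed
  have Fint: "F v - F u = integral {u..v} f" if "a \<le> u" "u \<le> v" "v \<le> b" for u v
    using FF[OF that] by (simp add: integral_unique)
  have bound: "\<bar>P z - P y + (z - y) * (F y - F a)\<bar> \<le> \<bar>z - y\<bar> * \<bar>A z - A y\<bar>"
    if y: "y \<in> {a..b}" and z: "z \<in> {a..b}" for y z
  proof (cases "y \<le> z")
    case True
    have c1: "integral {a..z} (\<lambda>x. x * f x) = integral {a..y} (\<lambda>x. x * f x) + integral {y..z} (\<lambda>x. x * f x)"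
      using Henstock_Kurzweil_Integration.integral_combine[of a y z "\<lambda>x. x * f x", OF _ _ xfi] y z True by simp
    have e: "P z - P y + (z - y) * (F y - F a) = integral {y..z} (\<lambda>x. x * f x) - z * (F z - F y)"
      unfolding P_def c1 by (simp add: algebra_simps)
    also have "\<dots> = integral {y..z} (\<lambda>x. (x - z) * f x)"
      using Fint[of y z] y z True unfolding left_diff_distrib
      by (subst integral_diff) (auto intro!: xfi integrable_on_mult_right fii)
    moreover have "(z - y) * (A z - A y) \<le> \<bar>z - y\<bar> * \<bar>A z - A y\<bar>"
      using True mult_left_mono[of "A z - A y" "\<bar>A z - A y\<bar>" "z - y"] by simp
    ultimately show ?thesis using gen[of y z z] y z True by simp
  next
    case False
    have c1: "integral {a..y} (\<lambda>x. x * f x) = integral {a..z} (\<lambda>x. x * f x) + integral {z..y} (\<lambda>x. x * f x)"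
      using Henstock_Kurzweil_Integration.integral_combine[of a z y "\<lambda>x. x * f x", OF _ _ xfi] y z False by simp
    have e: "P z - P y + (z - y) * (F y - F a) = - (integral {z..y} (\<lambda>x. x * f x) - z * (F y - F z))"
      unfolding P_def c1 by (simp add: algebra_simps)
    also have "\<dots> = - integral {z..y} (\<lambda>x. (x - z) * f x)"
      using Fint[of z y] y z False unfolding left_diff_distrib
      by (subst integral_diff) (auto intro!: xfi integrable_on_mult_right fii)
    finally have eq: "P z - P y + (z - y) * (F y - F a) = - integral {z..y} (\<lambda>x. (x - z) * f x)" .
    have m: "(y - z) * (A y - A z) \<le> \<bar>z - y\<bar> * \<bar>A z - A y\<bar>"
      using False mult_left_mono[of "A y - A z" "\<bar>A z - A y\<bar>" "y - z"] by simp
    have g: "\<bar>integral {z..y} (\<lambda>x. (x - z) * f x)\<bar> \<le> (y - z) * (A y - A z)"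
      by (rule gen) (use False y z in auto)
    show ?thesis unfolding eq abs_minus_cancel by (rule order_trans[OF g m])
  qed
  have dP: "(P has_real_derivative -(F y - F a)) (at y within {a..b})" if y: "y \<in> {a..b}" for y
  proof -
    have "((\<lambda>z. (P z - P y) / (z - y) - (-(F y - F a))) \<longlongrightarrow> 0) (at y within {a..b})"
    proof (rule Lim_null_comparison)
      show "\<forall>\<^sub>F z in at y within {a..b}. norm ((P z - P y) / (z - y) - - (F y - F a)) \<le> \<bar>A z - A y\<bar>"
        unfolding eventually_at_filter
      proof (intro always_eventually allI impI)
        fix z assume "z \<noteq> y" "z \<in> {a..b}"
        then have "(P z - P y) / (z - y) - - (F y - F a) = (P z - P y + (z - y) * (F y - F a)) / (z - y)"
          by (simp add: field_simps)
        then show "norm ((P z - P y) / (z - y) - - (F y - F a)) \<le> \<bar>A z - A y\<bar>"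
          using bound[OF y \<open>z \<in> {a..b}\<close>] \<open>z \<noteq> y\<close>
          by (simp add: abs_divide divide_le_eq mult.commute)
      qed
      have "(A \<longlongrightarrow> A y) (at y within {a..b})"
        using Ac y by (simp add: continuous_on_def)
      then have "((\<lambda>z. A z - A y) \<longlongrightarrow> A y - A y) (at y within {a..b})"
        by (intro tendsto_diff tendsto_const)
      then have "((\<lambda>z. \<bar>A z - A y\<bar>) \<longlongrightarrow> \<bar>A y - A y\<bar>) (at y within {a..b})"
        by (rule tendsto_rabs)
      then show "((\<lambda>z. \<bar>A z - A y\<bar>) \<longlongrightarrow> 0) (at y within {a..b})" by simp
    qed
    then have "((\<lambda>z. (P z - P y) / (z - y)) \<longlongrightarrow> (-(F y - F a))) (at y within {a..b})"
      by (simp add: Lim_null[symmetric])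
    then show ?thesis by (simp add: has_field_derivative_iff)
  qed
  have dQ: "(Q has_real_derivative -(F y - F a)) (at y within {a..b})" if y: "y \<in> {a..b}" for y
    unfolding Q_def
    by (intro derivative_intros integral_has_real_derivative continuous_intros Fc y)
  have "\<exists>c. \<forall>y\<in>{a..b}. P y - Q y = c"
    by (rule has_field_derivative_zero_constant)
       (auto intro!: derivative_eq_intros dP dQ)
  then obtain c where c: "\<forall>y\<in>{a..b}. P y - Q y = c" by blast
  have "P a - Q a = 0" unfolding P_def Q_def by simp
  then have PQ: "P b = Q b" using c ab by force
  have "integral {a..b} (\<lambda>x. (x - b) * f x) = integral {a..b} (\<lambda>x. x * f x) - b * integral {a..b} f"
    unfolding left_diff_distrib using ab
    by (subst integral_diff) (auto intro!: xfi integrable_on_mult_right fii)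
  also have "\<dots> = P b" unfolding P_def using Fint[of a b] ab by simp
  finally have "integral {a..b} (\<lambda>x. (x - b) * f x) = -(integral {a..b} (\<lambda>t. F t - F a))"
    using PQ Q_def by simp
  moreover have "(\<lambda>x. (x - b) * f x) integrable_on {a..b}"
    unfolding left_diff_distrib using ab
    by (auto intro!: integrable_diff xfi integrable_on_mult_right fii)
  ultimately show ?thesis using integrable_integral by fastforce
qed




lemma cell_orth:
  fixes E E1 e2 s2 :: "real \<Rightarrow> real"
  assumes ab: "a < b"
  and dE: "\<And>x. (E has_real_derivative E1 x) (at x)"
  and Ea: "E a = 0" and Eb: "E b = 0"
  and E1i: "\<And>x y. a \<le> x \<Longrightarrow> x \<le> y \<Longrightarrow> y \<le> b \<Longrightarrow> (e2 has_integral (E1 y - E1 x)) {x..y}"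
  and e2a: "e2 absolutely_integrable_on {a..b}"
  and E1c: "continuous_on {a..b} E1"
  and lin: "\<And>x. x \<in> {a..b} \<Longrightarrow> s2 x = \<alpha> + \<beta> * x"
  shows "integral {a..b} (\<lambda>x. s2 x * e2 x) = s2 b * E1 b - s2 a * E1 a"
proof -
  have e2i: "e2 integrable_on {a..b}" using e2a set_lebesgue_integral_eq_integral(1) by blast
  have p: "((\<lambda>x. (x - b) * e2 x) has_integral (-(integral {a..b} (\<lambda>t. E1 t - E1 a)))) {a..b}"
    using parts_lemma[OF _ e2a E1i E1c] ab by auto
  have ftc: "(E1 has_integral (E b - E a)) {a..b}"
    using ab by (intro fundamental_theorem_of_calculus)
      (auto intro: has_field_derivative_at_within simp flip: has_real_derivative_iff_has_vector_derivative simp: dE)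
  have "integral {a..b} (\<lambda>t. E1 t - E1 a) = (E b - E a) - (b - a) * E1 a"
    using ftc ab by (subst integral_diff) (auto simp: integral_unique has_integral_integrable)
  then have p2: "integral {a..b} (\<lambda>x. (x - b) * e2 x) = (b - a) * E1 a"
    using p Ea Eb by (simp add: integral_unique)
  have "integral {a..b} (\<lambda>x. s2 x * e2 x) = integral {a..b} (\<lambda>x. s2 b * e2 x + \<beta> * ((x - b) * e2 x))"
  proof (rule integral_cong)
    fix x assume "x \<in> {a..b}"
    then show "s2 x * e2 x = s2 b * e2 x + \<beta> * ((x - b) * e2 x)"
      using lin[of x] lin[of b] ab by (simp add: algebra_simps)
  qed
  also have "\<dots> = s2 b * integral {a..b} e2 + \<beta> * integral {a..b} (\<lambda>x. (x - b) * e2 x)"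
    using p e2i by (subst integral_add) (auto intro!: integrable_on_mult_right simp: has_integral_integrable)
  also have "integral {a..b} e2 = E1 b - E1 a"
    using E1i[of a b] ab by (simp add: integral_unique)
  finally have X: "integral {a..b} (\<lambda>x. s2 x * e2 x) = s2 b * (E1 b - E1 a) + \<beta> * integral {a..b} (\<lambda>x. (x - b) * e2 x)" .
  have sa: "s2 a = s2 b - \<beta> * (b - a)" using lin[of a] lin[of b] ab by (simp add: algebra_simps)
  show ?thesis unfolding X p2 sa by (simp add: algebra_simps)
qed

lemma cell_poinc:
  fixes E E1 e2 :: "real \<Rightarrow> real"
  assumes ab: "a < b"
  and dE: "\<And>x. (E has_real_derivative E1 x) (at x)"
  and Ea: "E a = 0" and Eb: "E b = 0"
  and E1i: "\<And>x y. a \<le> x \<Longrightarrow> x \<le> y \<Longrightarrow> y \<le> b \<Longrightarrow> (e2 has_integral (E1 y - E1 x)) {x..y}"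
  and e22: "(\<lambda>x. (e2 x)\<^sup>2) integrable_on {a..b}"
  shows "integral {a..b} (\<lambda>x. (E x)\<^sup>2) \<le> (b - a)^4 * integral {a..b} (\<lambda>x. (e2 x)\<^sup>2)"
proof -
  define I where "I = integral {a..b} (\<lambda>x. (e2 x)\<^sup>2)"
  have I0: "0 \<le> I" unfolding I_def by (rule integral_nonneg[OF e22]) auto
  have Ec: "continuous_on {a..b} E"
    by (rule continuous_at_imp_continuous_on) (use dE DERIV_isCont in blast)
  obtain \<xi> where \<xi>: "a < \<xi>" "\<xi> < b" "(\<lambda>v. E1 \<xi> * v) = (\<lambda>v. 0)"
    using Rolle_deriv[of a b E "\<lambda>x v. E1 x * v", OF ab _ Ec] Ea Eb dE
    by (auto simp: has_field_derivative_def)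
  then have E1xi: "E1 \<xi> = 0" by (metis mult_1_right)
  have sq: "(\<lambda>x. (e2 x)\<^sup>2) integrable_on {u..v}" if "a \<le> u" "v \<le> b" for u v
    using integrable_on_subinterval[OF e22] that by auto
  have sub: "integral {u..v} (\<lambda>x. (e2 x)\<^sup>2) \<le> I" if "a \<le> u" "u \<le> v" "v \<le> b" for u v
    unfolding I_def by (rule integral_subset_le) (use that sq e22 in auto)
  have cs: "(E1 v - E1 u)\<^sup>2 \<le> (b - a) * I" if "a \<le> u" "u \<le> v" "v \<le> b" for u v
  proof -
    have "(E1 v - E1 u)\<^sup>2 = (integral {u..v} e2)\<^sup>2" using E1i[OF that] by (simp add: integral_unique)
    also have "\<dots> \<le> (v - u) * integral {u..v} (\<lambda>x. (e2 x)\<^sup>2)"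
      by (rule cs_int) (use that E1i[OF that] sq in \<open>auto simp: has_integral_integrable\<close>)
    also have "\<dots> \<le> (b - a) * I"
      by (rule mult_mono) (use that sub[OF that] I0 integral_nonneg[OF sq[OF that(1,3)]] in auto)
    finally show ?thesis .
  qed
  have E1b: "(E1 x)\<^sup>2 \<le> (b - a) * I" if "x \<in> {a..b}" for x
  proof (cases "\<xi> \<le> x")
    case True then show ?thesis using cs[of \<xi> x] that \<xi> E1xi by auto
  next
    case False then show ?thesis using cs[of x \<xi>] that \<xi> E1xi by (auto simp: power2_eq_square)
  qed
  have Eb2: "(E x)\<^sup>2 \<le> (b - a)^3 * I" if x: "x \<in> {a..b}" for x
  proof (cases "x = a")
    case True then show ?thesis using Ea I0 ab by simp
  next
    case False
    then have ax: "a < x" using x by auto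
    obtain l z where z: "a < z" "z < x" "DERIV E z :> l" "E x - E a = (x - a) * l"
      using MVT[OF ax, of E] Ec x dE
      by (metis atLeastAtMost_iff continuous_on_subset real_differentiable_def subsetI order.trans less_imp_le)
    have l: "l = E1 z" using z(3) dE DERIV_unique by blast
    have "(E x)\<^sup>2 = (x - a)\<^sup>2 * (E1 z)\<^sup>2" using z(4) Ea l by (simp add: power_mult_distrib)
    also have "\<dots> \<le> (b - a)\<^sup>2 * ((b - a) * I)"
      by (rule mult_mono) (use x ax z E1b[of z] in \<open>auto intro!: power_mono\<close>)
    finally show ?thesis by (simp add: power2_eq_square power3_eq_cube algebra_simps)
  qed
  have E2i: "(\<lambda>x. (E x)\<^sup>2) integrable_on {a..b}"
    by (intro integrable_continuous_interval continuous_intros Ec)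
  have "integral {a..b} (\<lambda>x. (E x)\<^sup>2) \<le> integral {a..b} (\<lambda>x. (b - a)^3 * I)"
    by (rule integral_le[OF E2i]) (use Eb2 in auto)
  also have "\<dots> = (b - a)^4 * I" using ab by (simp add: power_Suc2 power3_eq_cube power4_eq_xxxx algebra_simps)
  finally show ?thesis unfolding I_def .
qed


lemma periodic_deriv:
  assumes p: "periodic1 f" and d: "\<And>x. (f has_real_derivative f' x) (at x)"
  shows "f' (x + 1) = f' x"
proof -
  have "((\<lambda>y. f (y + 1)) has_real_derivative f' (x + 1)) (at x)"
    using d[of "x + 1"] by (simp add: DERIV_shift)
  moreover have "(\<lambda>y. f (y + 1)) = f" using p unfolding periodic1_def by auto
  ultimately show ?thesis using d[of x] DERIV_unique by metis
qed

lemma spline_cell_linear: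
  assumes S: "spline23 xs M s s1 s2" and j: "j < M" and ab: "xs j < xs (Suc j)"
  shows "\<exists>\<alpha> \<beta>. \<forall>x\<in>{xs j..xs (Suc j)}. s2 x = \<alpha> + \<beta> * x"
proof -
  let ?a = "xs j" and ?b = "xs (Suc j)"
  obtain a0 b0 c0 d0 where p: "\<forall>x\<in>{?a..?b}. s x = a0 + b0 * x + c0 * x\<^sup>2 + d0 * x ^ 3"
    using S j unfolding spline23_def by blast
  have ds: "\<And>x. (s has_real_derivative s1 x) (at x)" and ds1: "\<And>x. (s1 has_real_derivative s2 x) (at x)"
    and cs2: "continuous_on UNIV s2"
    using S unfolding spline23_def by auto
  have eq1: "s1 x = b0 + 2 * c0 * x + 3 * d0 * x\<^sup>2" if x: "x \<in> {?a<..<?b}" for x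
  proof -
    have "((\<lambda>x. a0 + b0 * x + c0 * x\<^sup>2 + d0 * x ^ 3) has_real_derivative (b0 + 2 * c0 * x + 3 * d0 * x\<^sup>2)) (at x)"
      by (auto intro!: derivative_eq_intros simp: power2_eq_square)
    then have "(s has_real_derivative (b0 + 2 * c0 * x + 3 * d0 * x\<^sup>2)) (at x)"
      by (rule has_field_derivative_transform_within_open[where S="{?a<..<?b}"]) (use x p in auto)
    then show ?thesis using ds[of x] DERIV_unique by metis
  qed
  have eq2: "s2 x = 2 * c0 + 6 * d0 * x" if x: "x \<in> {?a<..<?b}" for x
  proof -
    have "((\<lambda>x. b0 + 2 * c0 * x + 3 * d0 * x\<^sup>2) has_real_derivative (2 * c0 + 6 * d0 * x)) (at x)"
      by (auto intro!: derivative_eq_intros simp: power2_eq_square)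
    then have "(s1 has_real_derivative (2 * c0 + 6 * d0 * x)) (at x)"
      by (rule has_field_derivative_transform_within_open[where S="{?a<..<?b}"]) (use x eq1 in auto)
    then show ?thesis using ds1[of x] DERIV_unique by metis
  qed
  have cl: "closed {x. s2 x = 2 * c0 + 6 * d0 * x}"
    by (rule closed_Collect_eq) (auto intro!: continuous_intros cs2)
  have "closure {?a<..<?b} \<subseteq> {x. s2 x = 2 * c0 + 6 * d0 * x}"
    by (rule closure_minimal) (use eq2 cl in auto)
  then have "\<forall>x\<in>{?a..?b}. s2 x = 2 * c0 + 6 * d0 * x" using ab by auto
  then show ?thesis by blast
qed

lemma key_estimates:
  assumes M: "is_mesh xs M 1" and H: "H2_T g g1 g2" and S: "spline23 xs M s s1 s2"
    and I: "\<forall>j<M. s (xs j) = g (xs j)"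
  shows "integral {0..1} (\<lambda>x. (s2 x)\<^sup>2) + integral {0..1} (\<lambda>x. (g2 x - s2 x)\<^sup>2) = integral {0..1} (\<lambda>x. (g2 x)\<^sup>2)"
   and "integral {0..1} (\<lambda>x. (g x - s x)\<^sup>2) \<le> (mesh_size xs M)^4 * integral {0..1} (\<lambda>x. (g2 x - s2 x)\<^sup>2)"
proof -
  define h where "h = mesh_size xs M"
  define E where "E x = g x - s x" for x
  define E1 where "E1 x = g1 x - s1 x" for x
  define e2 where "e2 x = g2 x - s2 x" for x
  have M1: "1 \<le> M" and x0: "xs 0 = 0" and xM: "xs M = 1" and inc: "\<forall>j<M. xs j < xs (Suc j)"
    using M unfolding is_mesh_def by auto
  have inc': "\<forall>j<M. xs j \<le> xs (Suc j)" using inc by (simp add: less_imp_le)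
  have xs01: "0 \<le> xs j \<and> xs j \<le> 1" if "j \<le> M" for j
    using mesh_mono[OF inc', of 0 j] mesh_mono[OF inc', of j M] that x0 xM by auto
  have steph: "xs (Suc j) - xs j \<le> h" if "j < M" for j
    unfolding h_def mesh_size_def by (rule Max_ge) (use that in auto)
  have pg: "periodic1 g" and pg2: "periodic1 g2" and L2: "L2_T g2"
    and dg: "\<And>x. (g has_real_derivative g1 x) (at x)"
    and g2i: "\<And>a b. a \<le> b \<Longrightarrow> (g2 has_integral (g1 b - g1 a)) {a..b}"
    using H unfolding H2_T_def by auto
  have ps: "periodic1 s" and ds: "\<And>x. (s has_real_derivative s1 x) (at x)"
    and ds1: "\<And>x. (s1 has_real_derivative s2 x) (at x)" and cs2: "continuous_on UNIV s2"
    using S unfolding spline23_def by auto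
  have dE: "(E has_real_derivative E1 x) (at x)" for x
    unfolding E_def E1_def by (intro derivative_intros dg ds)
  have EZ: "E (xs j) = 0" if "j \<le> M" for j
  proof (cases "j = M")
    case True
    have "E 1 = E (0 + 1)" by simp
    also have "\<dots> = E 0" using pg ps unfolding periodic1_def E_def by (metis add_0)
    also have "\<dots> = 0" using I M1 x0 unfolding E_def by force
    finally show ?thesis using True xM by simp
  next
    case False then show ?thesis using I that unfolding E_def by simp
  qed
  have s2i: "(s2 has_integral (s1 b - s1 a)) {a..b}" if "a \<le> b" for a b
    using that by (intro fundamental_theorem_of_calculus)
      (auto intro: has_field_derivative_at_within simp flip: has_real_derivative_iff_has_vector_derivative simp: ds1)
  have E1i: "(e2 has_integral (E1 b - E1 a)) {a..b}" if "a \<le> b" for a b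
    unfolding e2_def E1_def using has_integral_diff[OF g2i[OF that] s2i[OF that]] by (simp add: algebra_simps)
  have g2a: "g2 absolutely_integrable_on {0..1}" using L2 unfolding L2_T_def by auto
  have g22: "(\<lambda>x. (g2 x)\<^sup>2) integrable_on {0..1}" using L2 unfolding L2_T_def by auto
  have cs2': "continuous_on A s2" for A using cs2 continuous_on_subset by blast
  have s2a: "s2 absolutely_integrable_on {0..1}" by (rule absolutely_integrable_continuous_real[OF cs2'])
  have e2a: "e2 absolutely_integrable_on {0..1}" unfolding e2_def using g2a s2a by (rule set_integral_diff(1))
  have sga: "(\<lambda>x. s2 x * g2 x) absolutely_integrable_on {0..1}" by (rule abs_int_real_prod[OF g2a cs2'])
  have sgi: "(\<lambda>x. s2 x * g2 x) integrable_on {0..1}" using sga set_lebesgue_integral_eq_integral(1) by blast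
  have s22: "(\<lambda>x. (s2 x)\<^sup>2) integrable_on {0..1}" by (intro integrable_continuous_interval continuous_intros cs2')
  have e22: "(\<lambda>x. (e2 x)\<^sup>2) integrable_on {0..1}"
  proof -
    have "(\<lambda>x. (g2 x)\<^sup>2 - 2 * (s2 x * g2 x) + (s2 x)\<^sup>2) integrable_on {0..1}"
      by (intro integrable_add integrable_diff integrable_on_mult_right g22 sgi s22)
    moreover have "(\<lambda>x. (g2 x)\<^sup>2 - 2 * (s2 x * g2 x) + (s2 x)\<^sup>2) = (\<lambda>x. (e2 x)\<^sup>2)"
      unfolding e2_def by (auto simp: power2_eq_square algebra_simps)
    ultimately show ?thesis by simp
  qed
  have se2i: "(\<lambda>x. s2 x * e2 x) integrable_on {0..1}"
    using abs_int_real_prod[OF e2a cs2'] set_lebesgue_integral_eq_integral(1) by blast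
  have cg1: "continuous_on {0..1} g1"
  proof -
    have "continuous_on {0..1} (\<lambda>y. g1 0 + integral {0..y} g2)"
      by (intro continuous_intros indefinite_integral_continuous_1) (use g2i[of 0 1] in \<open>auto simp: has_integral_integrable\<close>)
    moreover have "g1 0 + integral {0..y} g2 = g1 y" if "y \<in> {0..1}" for y
      using g2i[of 0 y] that by (simp add: integral_unique)
    ultimately show ?thesis using continuous_on_cong by (metis (no_types, lifting))
  qed
  have cE1: "continuous_on {0..1} E1"
    unfolding E1_def by (intro continuous_intros cg1)
      (meson DERIV_isCont continuous_at_imp_continuous_on ds1)
  have cell: "integral {xs j..xs (Suc j)} (\<lambda>x. s2 x * e2 x) = s2 (xs (Suc j)) * E1 (xs (Suc j)) - s2 (xs j) * E1 (xs j)
      \<and> integral {xs j..xs (Suc j)} (\<lambda>x. (E x)\<^sup>2) \<le> h^4 * integral {xs j..xs (Suc j)} (\<lambda>x. (e2 x)\<^sup>2)"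
    if j: "j < M" for j
  proof -
    let ?a = "xs j" and ?b = "xs (Suc j)"
    have ab: "?a < ?b" using inc j by auto
    have sub: "{?a..?b} \<subseteq> {0..1}" using xs01[of j] xs01[of "Suc j"] j by auto
    obtain \<alpha> \<beta> where lin: "\<forall>x\<in>{?a..?b}. s2 x = \<alpha> + \<beta> * x"
      using spline_cell_linear[OF S j ab] by blast
    have o: "integral {?a..?b} (\<lambda>x. s2 x * e2 x) = s2 ?b * E1 ?b - s2 ?a * E1 ?a"
      by (rule cell_orth[OF ab dE EZ EZ E1i absolutely_integrable_on_subinterval[OF e2a sub]
            continuous_on_subset[OF cE1 sub]]) (use lin j in auto)
    have p: "integral {?a..?b} (\<lambda>x. (E x)\<^sup>2) \<le> (?b - ?a)^4 * integral {?a..?b} (\<lambda>x. (e2 x)\<^sup>2)"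
      by (rule cell_poinc[OF ab dE EZ EZ E1i integrable_on_subinterval[OF e22 sub]]) (use j in auto)
    have "(?b - ?a)^4 * integral {?a..?b} (\<lambda>x. (e2 x)\<^sup>2) \<le> h^4 * integral {?a..?b} (\<lambda>x. (e2 x)\<^sup>2)"
      by (rule mult_right_mono) (use ab steph[OF j] integral_nonneg[OF integrable_on_subinterval[OF e22 sub]]
          in \<open>auto intro!: power_mono\<close>)
    with o p show ?thesis by linarith
  qed
  have orth: "integral {0..1} (\<lambda>x. s2 x * e2 x) = 0"
  proof -
    have "integral {0..1} (\<lambda>x. s2 x * e2 x) = (\<Sum>j<M. integral {xs j..xs (Suc j)} (\<lambda>x. s2 x * e2 x))"
      using integral_mesh_sum[OF inc', of "\<lambda>x. s2 x * e2 x"] se2i x0 xM by simp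
    also have "\<dots> = (\<Sum>j<M. s2 (xs (Suc j)) * E1 (xs (Suc j)) - s2 (xs j) * E1 (xs j))"
      using cell by simp
    also have "\<dots> = s2 (xs M) * E1 (xs M) - s2 (xs 0) * E1 (xs 0)"
      by (rule sum_lessThan_telescope)
    also have "\<dots> = 0"
    proof -
      have "periodic1 s1" unfolding periodic1_def using periodic_deriv[OF ps ds] by blast
      then have "s2 (0 + 1) = s2 0" by (rule periodic_deriv[OF _ ds1])
      moreover have "E1 (0 + 1) = E1 0"
        by (rule periodic_deriv[OF _ dE]) (use pg ps in \<open>simp add: periodic1_def E_def\<close>)
      ultimately show ?thesis using x0 xM by simp
    qed
    finally show ?thesis .
  qed
  have E2i: "(\<lambda>x. (E x)\<^sup>2) integrable_on {0..1}"
    by (intro integrable_continuous_interval continuous_intros)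
       (meson DERIV_isCont continuous_at_imp_continuous_on dE)
  show "integral {0..1} (\<lambda>x. (s2 x)\<^sup>2) + integral {0..1} (\<lambda>x. (g2 x - s2 x)\<^sup>2) = integral {0..1} (\<lambda>x. (g2 x)\<^sup>2)"
  proof -
    have "(\<lambda>x. (g2 x)\<^sup>2) = (\<lambda>x. ((s2 x)\<^sup>2 + 2 * (s2 x * e2 x)) + (e2 x)\<^sup>2)"
      unfolding e2_def by (auto simp: power2_eq_square algebra_simps)
    then have "integral {0..1} (\<lambda>x. (g2 x)\<^sup>2) = integral {0..1} (\<lambda>x. ((s2 x)\<^sup>2 + 2 * (s2 x * e2 x)) + (e2 x)\<^sup>2)"
      by simp
    also have "\<dots> = integral {0..1} (\<lambda>x. (s2 x)\<^sup>2 + 2 * (s2 x * e2 x)) + integral {0..1} (\<lambda>x. (e2 x)\<^sup>2)"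
      by (intro integral_add integrable_add integrable_on_mult_right s22 se2i e22)
    also have "integral {0..1} (\<lambda>x. (s2 x)\<^sup>2 + 2 * (s2 x * e2 x)) = integral {0..1} (\<lambda>x. (s2 x)\<^sup>2) + integral {0..1} (\<lambda>x. 2 * (s2 x * e2 x))"
      by (intro integral_add integrable_on_mult_right s22 se2i)
    also have "integral {0..1} (\<lambda>x. 2 * (s2 x * e2 x)) = 0" using orth se2i by simp
    finally show ?thesis unfolding e2_def by simp
  qed
  show "integral {0..1} (\<lambda>x. (g x - s x)\<^sup>2) \<le> (mesh_size xs M)^4 * integral {0..1} (\<lambda>x. (g2 x - s2 x)\<^sup>2)"
  proof -
    have "integral {0..1} (\<lambda>x. (E x)\<^sup>2) = (\<Sum>j<M. integral {xs j..xs (Suc j)} (\<lambda>x. (E x)\<^sup>2))"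
      using integral_mesh_sum[OF inc', of "\<lambda>x. (E x)\<^sup>2"] E2i x0 xM by simp
    also have "\<dots> \<le> (\<Sum>j<M. h^4 * integral {xs j..xs (Suc j)} (\<lambda>x. (e2 x)\<^sup>2))"
      by (rule sum_mono) (use cell in auto)
    also have "\<dots> = h^4 * integral {0..1} (\<lambda>x. (e2 x)\<^sup>2)"
      using integral_mesh_sum[OF inc', of "\<lambda>x. (e2 x)\<^sup>2"] e22 x0 xM by (simp add: sum_distrib_left)
    finally show ?thesis unfolding E_def e2_def h_def .
  qed
qed


lemma int_sq_nonneg: "0 \<le> integral S (\<lambda>x. (f x)\<^sup>2 :: real)"
  by (cases "(\<lambda>x. (f x)\<^sup>2) integrable_on S") (auto intro: integral_nonneg simp: not_integrable_integral)

lemma final_ineq: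
  fixes S S2 A G2 Ee Ee2 K dt :: real
  assumes dt: "dt > 0" and K: "K \<ge> 0" and S2: "S2 \<ge> 0" and A: "A \<ge> 0" and Ee2: "Ee2 \<ge> 0"
    and G2: "G2 \<ge> 0"
    and orth: "S2 + Ee2 = G2" and po: "Ee \<le> dt * K * Ee2"
    and Sb: "S \<le> (1 + dt) * A + (1 + 1 / dt) * Ee"
  shows "S + K * S2 \<le> (1 + dt) * (A + K * G2)"
proof -
  have f1: "Ee / dt \<le> K * Ee2" using po dt by (simp add: divide_le_eq mult.commute mult.left_commute)
  have f2: "dt * K * Ee2 \<le> dt * K * G2" using orth S2 dt K by (intro mult_left_mono) auto
  have e1: "(1 + 1 / dt) * Ee = Ee + Ee / dt" by (simp add: algebra_simps)
  have e2: "K * S2 = K * G2 - K * Ee2" unfolding orth[symmetric] by (simp add: algebra_simps)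
  have e3: "(1 + dt) * (A + K * G2) = (1 + dt) * A + K * G2 + dt * K * G2" by (simp add: algebra_simps)
  show ?thesis unfolding e2 e3 using Sb e1 f1 f2 po by linarith
qed

theorem lemma15:
  shows "\<exists>C>0. \<forall>(N::nat) (ts::nat \<Rightarrow> real) (Tend::real) (M::nat) (xs::nat \<Rightarrow> real)
            (g::real \<Rightarrow> real) g1 g2 (s::real \<Rightarrow> real) s1 s2.
     is_mesh ts N Tend \<longrightarrow> mesh_size ts N < 1 \<longrightarrow>
     is_mesh xs M 1 \<longrightarrow>
     H2_T g g1 g2 \<longrightarrow>
     spline23 xs M s s1 s2 \<longrightarrow> (\<forall>j<M. s (xs j) = g (xs j)) \<longrightarrow>
     H2_hdt_norm (mesh_size xs M) (mesh_size ts N) s s2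
       \<le> (1 + C * mesh_size ts N) * H2_hdt_norm (mesh_size xs M) (mesh_size ts N) g g2"
proof (intro exI[of _ 1] conjI allI impI)
  fix N ts Tend M xs g g1 g2 s s1 s2
  assume T: "is_mesh ts N Tend" and dt1: "mesh_size ts N < 1" and M: "is_mesh xs M 1"
    and H: "H2_T g g1 g2" and Sp: "spline23 xs M s s1 s2" and I: "\<forall>j<M. s (xs j) = g (xs j)"
  define dt where "dt = mesh_size ts N"
  define h where "h = mesh_size xs M"
  define K where "K = h ^ 4 / dt"
  have dt0: "dt > 0"
  proof -
    have "ts (Suc 0) - ts 0 \<le> dt"
      unfolding dt_def mesh_size_def by (rule Max_ge) (use T in \<open>auto simp: is_mesh_def intro!: image_eqI[where x=0]\<close>)
    moreover have "ts 0 < ts (Suc 0)" using T unfolding is_mesh_def by auto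
    ultimately show ?thesis by linarith
  qed
  have h0: "h \<ge> 0"
  proof -
    have "xs (Suc 0) - xs 0 \<le> h"
      unfolding h_def mesh_size_def by (rule Max_ge) (use M in \<open>auto simp: is_mesh_def intro!: image_eqI[where x=0]\<close>)
    moreover have "xs 0 < xs (Suc 0)" using M unfolding is_mesh_def by auto
    ultimately show ?thesis by linarith
  qed
  have K0: "K \<ge> 0" unfolding K_def using dt0 h0 by simp
  have cg: "continuous_on UNIV g" using H unfolding H2_T_def
    by (meson DERIV_isCont continuous_at_imp_continuous_on)
  have cs: "continuous_on UNIV s" using Sp unfolding spline23_def
    by (meson DERIV_isCont continuous_at_imp_continuous_on)
  have cs2: "continuous_on UNIV s2" using Sp unfolding spline23_def by auto
  have g22: "(\<lambda>x. (g2 x)\<^sup>2) integrable_on {0..1}" using H unfolding H2_T_def L2_T_def by auto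
  define A where "A = integral {0..1} (\<lambda>x. (g x)\<^sup>2)"
  define G2 where "G2 = integral {0..1} (\<lambda>x. (g2 x)\<^sup>2)"
  define SS where "SS = integral {0..1} (\<lambda>x. (s x)\<^sup>2)"
  define S2 where "S2 = integral {0..1} (\<lambda>x. (s2 x)\<^sup>2)"
  define Ee where "Ee = integral {0..1} (\<lambda>x. (g x - s x)\<^sup>2)"
  define Ee2 where "Ee2 = integral {0..1} (\<lambda>x. (g2 x - s2 x)\<^sup>2)"
  have ke1: "S2 + Ee2 = G2" and ke2: "Ee \<le> h^4 * Ee2"
    using key_estimates[OF M H Sp I] unfolding S2_def Ee2_def G2_def Ee_def h_def by auto
  have po: "Ee \<le> dt * K * Ee2" using ke2 dt0 unfolding K_def by simp
  have gi: "(\<lambda>x. (g x)\<^sup>2) integrable_on {0..1}"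
    by (intro integrable_continuous_interval continuous_intros continuous_on_subset[OF cg]) auto
  have ei: "(\<lambda>x. (g x - s x)\<^sup>2) integrable_on {0..1}"
    by (intro integrable_continuous_interval continuous_intros continuous_on_subset[OF cg]
        continuous_on_subset[OF cs]) auto
  have si: "(\<lambda>x. (s x)\<^sup>2) integrable_on {0..1}"
    by (intro integrable_continuous_interval continuous_intros continuous_on_subset[OF cs]) auto
  have pw: "(s x)\<^sup>2 \<le> (1 + dt) * (g x)\<^sup>2 + (1 + 1 / dt) * (g x - s x)\<^sup>2" for x
  proof -
    have "0 \<le> (dt * g x + (g x - s x))\<^sup>2 / dt" using dt0 by simp
    also have "(dt * g x + (g x - s x))\<^sup>2 / dt = (1 + dt) * (g x)\<^sup>2 + (1 + 1 / dt) * (g x - s x)\<^sup>2 - (s x)\<^sup>2"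
      using dt0 by (simp add: field_simps power2_eq_square)
    finally show ?thesis by simp
  qed
  have Sb: "SS \<le> (1 + dt) * A + (1 + 1 / dt) * Ee"
  proof -
    have "SS \<le> integral {0..1} (\<lambda>x. (1 + dt) * (g x)\<^sup>2 + (1 + 1 / dt) * (g x - s x)\<^sup>2)"
      unfolding SS_def by (rule integral_le[OF si]) (auto intro!: integrable_add integrable_on_mult_right gi ei pw)
    also have "\<dots> = (1 + dt) * A + (1 + 1 / dt) * Ee"
      unfolding A_def Ee_def by (subst integral_add) (auto intro!: integrable_on_mult_right gi ei)
    finally show ?thesis .
  qed
  have main: "SS + K * S2 \<le> (1 + dt) * (A + K * G2)"
    by (rule final_ineq[OF dt0 K0 _ _ _ _ ke1 po Sb]) (auto simp: S2_def A_def Ee2_def G2_def int_sq_nonneg)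
  have N0: "0 \<le> A + K * G2" using K0 by (auto simp: A_def G2_def int_sq_nonneg)
  have "SS + K * S2 \<le> (1 + dt)\<^sup>2 * (A + K * G2)"
  proof -
    have "(1 + dt) * (A + K * G2) \<le> (1 + dt)\<^sup>2 * (A + K * G2)"
      by (rule mult_right_mono[OF _ N0]) (use dt0 in \<open>simp add: power2_eq_square\<close>)
    with main show ?thesis by linarith
  qed
  then have "sqrt (SS + K * S2) \<le> sqrt ((1 + dt)\<^sup>2 * (A + K * G2))" by (rule real_sqrt_le_mono)
  also have "\<dots> = (1 + dt) * sqrt (A + K * G2)" using dt0 by (simp add: real_sqrt_mult)
  finally have fin: "sqrt (SS + K * S2) \<le> (1 + dt) * sqrt (A + K * G2)" .
  have n1: "H2_hdt_norm h dt s s2 = sqrt (SS + K * S2)"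
    unfolding H2_hdt_norm_def L2_norm_T_def SS_def S2_def K_def by (simp add: int_sq_nonneg)
  have n2: "H2_hdt_norm h dt g g2 = sqrt (A + K * G2)"
    unfolding H2_hdt_norm_def L2_norm_T_def A_def G2_def K_def by (simp add: int_sq_nonneg)
  show "H2_hdt_norm (mesh_size xs M) (mesh_size ts N) s s2
       \<le> (1 + 1 * mesh_size ts N) * H2_hdt_norm (mesh_size xs M) (mesh_size ts N) g g2"
    using fin n1 n2 unfolding h_def dt_def by simp
qed (simp)


end
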